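(* Consider the following RSS-based localization setting. A stationary target is at an unknown position $\mathbf{s}=(x,y,0)\in\mathbb{R}^3$. There are $N$ UAVs; UAV $i$ ($1\le i\le N$) takes $M_i\ge1$ measurements, the $j$-th one at position $\mathbf{u}_{i,j}=(x_{i,j},y_{i,j},h_{i,j})$. Let $r_{i,j}=\sqrt{(x-x_{i,j})^2+(y-y_{i,j})^2}$, $d_{i,j}=\sqrt{r_{i,j}^2+h_{i,j}^2}$, and let $\beta_{i,j}$ be the horizontal UAV–target angle, i.e. $(x_{i,j}-x,\,y_{i,j}-y)=r_{i,j}(\cos\beta_{i,j},\sin\beta_{i,j})$, with $\mathbf{g}_{i,j}=(\cos\beta_{i,j},\sin\beta_{i,j})^T$. The $j$-th measurement of UAV $i$ is $R_{i,j}=p_0-10\gamma\log_{10}(d_{i,j})+\eta_{i,j}$ with known $p_0$, $\gamma>0$ and independent noises $\eta_{i,j}\sim\mathcal{N}(0,\sigma_i^2)$, $\sigma_i>0$. The Fisher information matrix for $(x,y)$ is $$\mathbf{F}=\Big(\frac{10\gamma}{\ln 10}\Big)^2\sum_{i=1}^N\sum_{j=1}^{M_i}\sigma_i^{-2}\frac{r_{i,j}^2}{d_{i,j}^4}\mathbf{g}_{i,j}\mathbf{g}_{i,j}^T.$$ A configuration is feasible if $r_{i,j}\ge r_0$, $h_{i,j}\ge h_0$ for all $i,j$, and $\|\mathbf{u}_{i,j}-\mathbf{u}_{i,j-1}\|\le t_0c_{\max}$ for $2\le j\le M_i$, where $r_0,h_0,t_0,c_{\max}>0$ are given. Problem P is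 to maximize $\det\mathbf{F}$ over feasible configurations. Let $r^*=\max\{r_0,h_0\}$. Suppose $M_i=M$ for all $i$, $t_0Mc_{\max}<2\pi r^*$, and $\max\{\sigma_i^{-2}:1\le i\le N\}\le\frac12\sum_{i=1}^N\sigma_i^{-2}$. Let $\beta_{1,0},\dots,\beta_{N,0}$ be angles satisfying $\sum_{i=1}^N\sigma_i^{-2}\mathbf{g}(\beta_{i,0})\mathbf{g}(\beta_{i,0})^T=\frac12\big(\sum_{i=1}^N\sigma_i^{-2}\big)\mathbf{I}$, where $\mathbf{g}(\beta)=(\cos\beta,\sin\beta)^T$, and let $0\le c<c_{\max}$. Then the configuration with $r_{i,j}=r^*$, $h_{i,j}=h_0$ and $$\beta_{i,j}=\beta_{i,0}+(j-1)\frac{ct_0}{r^*},\qquad 1\le i\le N,\ 1\le j\le M,$$ is an optimal solution of problem P.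
   Context: $\mathbf{I}$ is the $2\times2$ identity matrix. The optimization is over UAV positions for a given target position $\mathbf{s}$. *)

theory Defs
  imports "HOL-Analysis.Analysis"
begin

definition target :: "real \<Rightarrow> real \<Rightarrow> real^3" where
  "target x y = vector [x, y, 0]"

definition hdist :: "real \<Rightarrow> real \<Rightarrow> real^3 \<Rightarrow> real" where
  "hdist x y u = sqrt ((x - u$1)^2 + (y - u$2)^2)"

definition gdir :: "real \<Rightarrow> real^2" where
  "gdir b = vector [cos b, sin b]"

definition gvec :: "real \<Rightarrow> real \<Rightarrow> real^3 \<Rightarrow> real^2" where
  "gvec x y u = (1 / hdist x y u) *\<^sub>R vector [u$1 - x, u$2 - y]"

definition outer :: "real^2 \<Rightarrow> real^2 \<Rightarrow> real^2^2" where
  "outer v w = (\<chi> k l. v$k * w$l)"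

definition FIM :: "real \<Rightarrow> (nat \<Rightarrow> real) \<Rightarrow> nat \<Rightarrow> nat \<Rightarrow> real \<Rightarrow> real
    \<Rightarrow> (nat \<Rightarrow> nat \<Rightarrow> real^3) \<Rightarrow> real^2^2" where
  "FIM \<gamma> \<sigma> N M x y u =
     (10 * \<gamma> / ln 10)^2 *\<^sub>R
     (\<Sum>i=1..N. \<Sum>j=1..M.
        (inverse ((\<sigma> i)^2) * (hdist x y (u i j))^2 / (norm (u i j - target x y))^4)
          *\<^sub>R outer (gvec x y (u i j)) (gvec x y (u i j)))"

definition feasible :: "real \<Rightarrow> real \<Rightarrow> real \<Rightarrow> real \<Rightarrow> nat \<Rightarrow> nat \<Rightarrow> real \<Rightarrow> real
    \<Rightarrow> (nat \<Rightarrow> nat \<Rightarrow> real^3) \<Rightarrow> bool" where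
  "feasible r0 h0 t0 cmax N M x y u \<longleftrightarrow>
     (\<forall>i\<in>{1..N}. \<forall>j\<in>{1..M}.
        hdist x y (u i j) \<ge> r0 \<and> (u i j)$3 \<ge> h0 \<and>
        (j \<ge> 2 \<longrightarrow> norm (u i j - u i (j - 1)) \<le> t0 * cmax))"

definition optimal_P :: "real \<Rightarrow> (nat \<Rightarrow> real) \<Rightarrow> real \<Rightarrow> real \<Rightarrow> real \<Rightarrow> real
    \<Rightarrow> nat \<Rightarrow> nat \<Rightarrow> real \<Rightarrow> real \<Rightarrow> (nat \<Rightarrow> nat \<Rightarrow> real^3) \<Rightarrow> bool" where
  "optimal_P \<gamma> \<sigma> r0 h0 t0 cmax N M x y u \<longleftrightarrow>
     feasible r0 h0 t0 cmax N M x y u \<and>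
     (\<forall>v. feasible r0 h0 t0 cmax N M x y v \<longrightarrow>
        det (FIM \<gamma> \<sigma> N M x y v) \<le> det (FIM \<gamma> \<sigma> N M x y u))"

end

theory Submission
  imports Defs
begin

lemma FIM_entry: "FIM \<gamma> \<sigma> N M x y u $ k $ l = (10*\<gamma>/ln 10)^2 * (\<Sum>i=1..N. \<Sum>j=1..M. (inverse((\<sigma> i)^2) * (hdist x y (u i j))^2 / (norm (u i j - target x y))^4) * (gvec x y (u i j) $ k * gvec x y (u i j) $ l))"
  by (simp add: FIM_def outer_def sum_distrib_left)

lemma hdist_sq: "(hdist x y u)^2 = (x - u$1)^2 + (y - u$2)^2"
  unfolding hdist_def by simp

lemma norm_sq3: "(norm (u - target x y))^2 = (hdist x y u)^2 + (u$3)^2"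
proof -
  have "(norm (u - target x y))^2 = (u - target x y) \<bullet> (u - target x y)" by (rule power2_norm_eq_inner)
  also have "\<dots> = (hdist x y u)^2 + (u$3)^2"
    unfolding inner_vec_def sum_3 hdist_sq target_def by (simp add: power2_eq_square algebra_simps)
  finally show ?thesis .
qed

lemma gvec_unit: assumes "hdist x y u > 0" shows "(gvec x y u $ 1)^2 + (gvec x y u $ 2)^2 = 1"
proof -
  have h: "(hdist x y u)^2 = (u$1 - x)^2 + (u$2 - y)^2" unfolding hdist_def by (simp add: power2_commute)
  have p: "(u$1 - x)^2 + (u$2 - y)^2 > 0" using assms h by (metis zero_less_power2 less_irrefl)
  show ?thesis using p h by (auto simp: gvec_def power_divide add_divide_distrib[symmetric])
qed

lemma amgm2: "(a::real) * b \<le> ((a + b)/2)^2"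
proof -
  have e: "((a+b)/2)^2 - a*b = ((a-b)/2)^2" by (simp add: power2_eq_square field_simps)
  have "0 \<le> ((a+b)/2)^2 - a*b" unfolding e by simp
  thus ?thesis by (simp only: diff_ge_0_iff_ge)
qed

lemma det_sym: fixes A :: "real^2^2" assumes "A$1$2 = A$2$1" shows "det A \<le> ((A$1$1 + A$2$2)/2)^2"
proof -
  have "det A = A$1$1 * A$2$2 - A$1$2 * A$1$2" using assms by (simp add: det_2)
  moreover have "0 \<le> A$1$2 * A$1$2" by simp
  moreover have "A$1$1 * A$2$2 \<le> ((A$1$1 + A$2$2)/2)^2" by (rule amgm2)
  ultimately show ?thesis by linarith
qed

lemma ratio_aux: fixes t T a :: real assumes "t > 0" "T > 0" "a > 0" "(t - T) * (t*T - a^2) \<ge> 0"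
  shows "t / (t + a)^2 \<le> T / (T + a)^2"
proof -
  have "t * (T + a)^2 \<le> T * (t + a)^2" using assms(4) by (simp add: power2_eq_square algebra_simps)
  thus ?thesis using assms by (simp add: divide_simps)
qed

lemma ratio_bound: fixes r0 h0 h z :: real assumes "r0 > 0" "h0 > 0" "h \<ge> r0" "z \<ge> h0"
  shows "h^2 / (h^2 + z^2)^2 \<le> (max r0 h0)^2 / ((max r0 h0)^2 + h0^2)^2"
proof -
  have "h^2 / (h^2 + z^2)^2 \<le> h^2 / (h^2 + h0^2)^2"
    using assms by (intro divide_left_mono power_mono add_left_mono) (auto intro: power_mono)
  also have "\<dots> \<le> (max r0 h0)^2 / ((max r0 h0)^2 + h0^2)^2"
  proof (rule ratio_aux)
    show "(h^2 - (max r0 h0)^2) * (h^2 * (max r0 h0)^2 - (h0^2)^2) \<ge> 0"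
    proof (cases "r0 \<ge> h0")
      case True
      hence m: "max r0 h0 = r0" by simp
      have "h^2 \<ge> r0^2" using assms by (intro power_mono) auto
      moreover have "r0^2 \<ge> h0^2" using True assms by (intro power_mono) auto
      ultimately have "h^2 * r0^2 \<ge> h0^2 * h0^2" by (intro mult_mono) auto
      then show ?thesis using m \<open>h^2 \<ge> r0^2\<close> by (simp add: power2_eq_square[of "h0^2"])
    next
      case False
      hence m: "max r0 h0 = h0" by simp
      have "(h^2 - h0^2) * (h^2 * h0^2 - (h0^2)^2) = h0^2 * (h^2 - h0^2)^2" by (simp add: power2_eq_square algebra_simps)
      then show ?thesis using m by simp
    qed
  qed (use assms in auto)
  finally show ?thesis .
qed

lemma chord: fixes A B :: real shows "(cos A - cos B)^2 + (sin A - sin B)^2 \<le> (A - B)^2"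
proof -
  have e0: "(sin A)^2 + (cos A)^2 = 1" "(sin B)^2 + (cos B)^2 = 1" by simp_all
  have e1: "(cos A - cos B)^2 + (sin A - sin B)^2 = 2 - 2*cos(A - B)"
    apply (simp add: cos_diff power2_diff)
    using e0 by linarith
  have e2a: "A - B = 2*((A-B)/2)" by simp
  have "cos(A-B) = cos(2*((A-B)/2))" by (subst e2a) (rule refl)
  also have "\<dots> = 1 - 2*(sin((A-B)/2))^2" by (rule cos_double_sin)
  finally have e2: "cos(A-B) = 1 - 2*(sin((A-B)/2))^2" .
  have e3: "(sin((A-B)/2))^2 \<le> ((A-B)/2)^2"
    using abs_sin_x_le_abs_x[of "(A-B)/2"] by (metis power2_abs abs_ge_zero power_mono)
  have e4: "4 * ((A-B)/2)^2 = (A-B)^2" by (simp add: power_divide)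
  show ?thesis using e1 e2 e3 e4 by linarith
qed

lemma norm3_sq: "(norm (v::real^3))^2 = (v$1)^2 + (v$2)^2 + (v$3)^2"
proof -
  have "(norm v)^2 = v \<bullet> v" by (rule power2_norm_eq_inner)
  also have "\<dots> = (v$1)^2 + (v$2)^2 + (v$3)^2"
    unfolding inner_vec_def sum_3 by (simp add: power2_eq_square)
  finally show ?thesis .
qed

lemma rotation:
  fixes w \<beta> :: "nat \<Rightarrow> real" and I :: "nat set" and S \<phi> :: real
  assumes cc: "(\<Sum>i\<in>I. w i * (cos (\<beta> i) * cos (\<beta> i))) = S"
      and ss: "(\<Sum>i\<in>I. w i * (sin (\<beta> i) * sin (\<beta> i))) = S"
      and cs: "(\<Sum>i\<in>I. w i * (cos (\<beta> i) * sin (\<beta> i))) = 0"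
  shows "(\<Sum>i\<in>I. w i * (cos (\<beta> i + \<phi>) * cos (\<beta> i + \<phi>))) = S"
    and "(\<Sum>i\<in>I. w i * (sin (\<beta> i + \<phi>) * sin (\<beta> i + \<phi>))) = S"
    and "(\<Sum>i\<in>I. w i * (cos (\<beta> i + \<phi>) * sin (\<beta> i + \<phi>))) = 0"
proof -
  let ?c = "cos \<phi>" and ?s = "sin \<phi>"
  have 1: "(\<Sum>i\<in>I. w i * (cos (\<beta> i + \<phi>) * cos (\<beta> i + \<phi>))) =
     (\<Sum>i\<in>I. ?c*?c * (w i * (cos (\<beta> i) * cos (\<beta> i))) - 2*?c*?s * (w i * (cos (\<beta> i) * sin (\<beta> i))) + ?s*?s * (w i * (sin (\<beta> i) * sin (\<beta> i))))"
    by (rule sum.cong) (auto simp: cos_add algebra_simps)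
  have 2: "(\<Sum>i\<in>I. w i * (sin (\<beta> i + \<phi>) * sin (\<beta> i + \<phi>))) =
     (\<Sum>i\<in>I. ?s*?s * (w i * (cos (\<beta> i) * cos (\<beta> i))) + 2*?c*?s * (w i * (cos (\<beta> i) * sin (\<beta> i))) + ?c*?c * (w i * (sin (\<beta> i) * sin (\<beta> i))))"
    by (rule sum.cong) (auto simp: sin_add algebra_simps)
  have 3: "(\<Sum>i\<in>I. w i * (cos (\<beta> i + \<phi>) * sin (\<beta> i + \<phi>))) =
     (\<Sum>i\<in>I. ?c*?s * (w i * (cos (\<beta> i) * cos (\<beta> i))) + (?c*?c - ?s*?s) * (w i * (cos (\<beta> i) * sin (\<beta> i))) - ?c*?s * (w i * (sin (\<beta> i) * sin (\<beta> i))))"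
    by (rule sum.cong) (auto simp: sin_add cos_add algebra_simps)
  have sc: "?s*?s + ?c*?c = 1" using sin_cos_squared_add[of \<phi>] by (simp add: power2_eq_square)
  have sc': "S * (?c*?c) + S * (?s*?s) = S" using sc by (metis distrib_left mult_1_right add.commute)
  show "(\<Sum>i\<in>I. w i * (cos (\<beta> i + \<phi>) * cos (\<beta> i + \<phi>))) = S"
    unfolding 1 sum.distrib sum_subtractf sum_distrib_left[symmetric] cc ss cs
    apply (simp add: algebra_simps) using sc' by linarith
  show "(\<Sum>i\<in>I. w i * (sin (\<beta> i + \<phi>) * sin (\<beta> i + \<phi>))) = S"
    unfolding 2 sum.distrib sum_subtractf sum_distrib_left[symmetric] cc ss cs
    apply (simp add: algebra_simps) using sc' by linarith
  show "(\<Sum>i\<in>I. w i * (cos (\<beta> i + \<phi>) * sin (\<beta> i + \<phi>))) = 0"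
    unfolding 3 sum.distrib sum_subtractf sum_distrib_left[symmetric] cc ss cs
    by (simp add: algebra_simps)
qed


theorem theorem5:
  fixes \<gamma> r0 h0 t0 cmax c x y :: real
    and \<sigma> \<beta>0 :: "nat \<Rightarrow> real"
    and N M :: nat
  assumes "N \<ge> 1" and "M \<ge> 1"
    and "\<gamma> > 0" and "\<forall>i\<in>{1..N}. \<sigma> i > 0"
    and "r0 > 0" and "h0 > 0" and "t0 > 0" and "cmax > 0"
    and "t0 * real M * cmax < 2 * pi * max r0 h0"
    and "Max ((\<lambda>i. inverse ((\<sigma> i)^2)) ` {1..N}) \<le> (1/2) * (\<Sum>i=1..N. inverse ((\<sigma> i)^2))"
    and "(\<Sum>i=1..N. inverse ((\<sigma> i)^2) *\<^sub>R outer (gdir (\<beta>0 i)) (gdir (\<beta>0 i)))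
         = ((1/2) * (\<Sum>i=1..N. inverse ((\<sigma> i)^2))) *\<^sub>R mat 1"
    and "0 \<le> c" and "c < cmax"
  shows "optimal_P \<gamma> \<sigma> r0 h0 t0 cmax N M x y
           (\<lambda>i j. vector [x + max r0 h0 * cos (\<beta>0 i + (real j - 1) * c * t0 / max r0 h0),
                          y + max r0 h0 * sin (\<beta>0 i + (real j - 1) * c * t0 / max r0 h0),
                          h0])"
proof -
  define R where "R = max r0 h0"
  define th where "th i j = \<beta>0 i + (real j - 1) * c * t0 / R" for i j :: nat
  define u where "u i j = (vector [x + R * cos (th i j), y + R * sin (th i j), h0] :: real^3)" for i j
  define K where "K = (10 * \<gamma> / ln 10)^2"
  define w where "w i = inverse ((\<sigma> i)^2)" for i
  define S where "S = (\<Sum>i=1..N. w i)"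
  define \<rho> where "\<rho> = R^2 / (R^2 + h0^2)^2"
  have R0: "R > 0" using assms(5) unfolding R_def by simp
  have ueq: "(\<lambda>i j. vector [x + max r0 h0 * cos (\<beta>0 i + (real j - 1) * c * t0 / max r0 h0),
                          y + max r0 h0 * sin (\<beta>0 i + (real j - 1) * c * t0 / max r0 h0),
                          h0]) = u"
    by (intro ext) (simp add: u_def th_def R_def)
  have w0: "w i \<ge> 0" for i unfolding w_def by simp
  have K0: "K \<ge> 0" unfolding K_def by simp
  have \<rho>0: "\<rho> \<ge> 0" unfolding \<rho>_def by simp
  have S0: "S \<ge> 0" unfolding S_def using w0 by (simp add: sum_nonneg)
  have hu: "hdist x y (u i j) = R" for i j
  proof -
    have "(hdist x y (u i j))^2 = (R * cos (th i j))^2 + (R * sin (th i j))^2" unfolding hdist_sq u_def by simp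
    also have "\<dots> = R^2" using sin_cos_squared_add[of "th i j"] by algebra
    finally have e: "(hdist x y (u i j))^2 = R^2" .
    have "hdist x y (u i j) \<ge> 0" unfolding hdist_def by simp
    thus ?thesis using e R0 power2_eq_iff_nonneg[of "hdist x y (u i j)" R] by simp
  qed
  have gu1: "gvec x y (u i j) $ 1 = cos (th i j)" for i j
    unfolding gvec_def hu using R0 by (simp add: u_def)
  have gu2: "gvec x y (u i j) $ 2 = sin (th i j)" for i j
    unfolding gvec_def hu using R0 by (simp add: u_def)
  have nu: "(norm (u i j - target x y))^4 = (R^2 + h0^2)^2" for i j
  proof -
    have "(norm (u i j - target x y))^4 = ((norm (u i j - target x y))^2)^2" by simp
    also have "\<dots> = (R^2 + h0^2)^2" unfolding norm_sq3 hu by (simp add: u_def)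
    finally show ?thesis .
  qed
  have coefu: "inverse ((\<sigma> i)^2) * (hdist x y (u i j))^2 / (norm (u i j - target x y))^4 = w i * \<rho>" for i j
    unfolding hu nu w_def \<rho>_def by simp
  have Fu: "FIM \<gamma> \<sigma> N M x y u $ k $ l = K * (\<Sum>i=1..N. \<Sum>j=1..M. w i * \<rho> * (gvec x y (u i j) $ k * gvec x y (u i j) $ l))" for k l
    unfolding FIM_entry coefu K_def by simp
  have hc: "(\<Sum>i\<in>{1..N}. w i * (cos (\<beta>0 i) * cos (\<beta>0 i))) = S/2"
    using arg_cong[OF assms(11), of "\<lambda>A. A$1$1"] by (simp add: outer_def gdir_def w_def S_def mat_def)
  have hs: "(\<Sum>i\<in>{1..N}. w i * (sin (\<beta>0 i) * sin (\<beta>0 i))) = S/2"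
    using arg_cong[OF assms(11), of "\<lambda>A. A$2$2"] by (simp add: outer_def gdir_def w_def S_def mat_def)
  have hcs: "(\<Sum>i\<in>{1..N}. w i * (cos (\<beta>0 i) * sin (\<beta>0 i))) = 0"
    using arg_cong[OF assms(11), of "\<lambda>A. A$1$2"] by (simp add: outer_def gdir_def w_def S_def mat_def)
  define T where "T = K * \<rho> * (real M * S / 2)"
  have F11: "FIM \<gamma> \<sigma> N M x y u $ 1 $ 1 = T"
  proof -
    have "(\<Sum>i=1..N. \<Sum>j=1..M. w i * \<rho> * (cos (th i j) * cos (th i j))) = \<rho> * (\<Sum>j=1..M. \<Sum>i=1..N. w i * (cos (th i j) * cos (th i j)))"
      by (subst sum.swap) (simp add: sum_distrib_left mult_ac)
    also have "\<dots> = \<rho> * (\<Sum>j=1..M. S/2)"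
    proof -
      have "(\<Sum>i=1..N. w i * (cos (th i j) * cos (th i j))) = S/2" for j unfolding th_def by (rule rotation(1)[OF hc hs hcs])
      thus ?thesis by (simp only:)
    qed
    finally show ?thesis unfolding Fu gu1 gu2 T_def by simp
  qed
  have F22: "FIM \<gamma> \<sigma> N M x y u $ 2 $ 2 = T"
  proof -
    have "(\<Sum>i=1..N. \<Sum>j=1..M. w i * \<rho> * (sin (th i j) * sin (th i j))) = \<rho> * (\<Sum>j=1..M. \<Sum>i=1..N. w i * (sin (th i j) * sin (th i j)))"
      by (subst sum.swap) (simp add: sum_distrib_left mult_ac)
    also have "\<dots> = \<rho> * (\<Sum>j=1..M. S/2)"
    proof -
      have "(\<Sum>i=1..N. w i * (sin (th i j) * sin (th i j))) = S/2" for j unfolding th_def by (rule rotation(2)[OF hc hs hcs])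
      thus ?thesis by (simp only:)
    qed
    finally show ?thesis unfolding Fu gu1 gu2 T_def by simp
  qed
  have F12: "FIM \<gamma> \<sigma> N M x y u $ 1 $ 2 = 0"
  proof -
    have "(\<Sum>i=1..N. \<Sum>j=1..M. w i * \<rho> * (cos (th i j) * sin (th i j))) = \<rho> * (\<Sum>j=1..M. \<Sum>i=1..N. w i * (cos (th i j) * sin (th i j)))"
      by (subst sum.swap) (simp add: sum_distrib_left mult_ac)
    also have "\<dots> = 0"
    proof -
      have "(\<Sum>i=1..N. w i * (cos (th i j) * sin (th i j))) = 0" for j unfolding th_def by (rule rotation(3)[OF hc hs hcs])
      thus ?thesis by (simp only: sum.neutral_const mult_zero_right)
    qed
    finally show ?thesis unfolding Fu gu1 gu2 by simp
  qed
  have detu: "det (FIM \<gamma> \<sigma> N M x y u) = T^2"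
    unfolding det_2 F11 F22 F12 by (simp add: power2_eq_square)
  have feas_u: "feasible r0 h0 t0 cmax N M x y u"
    unfolding feasible_def
  proof (intro ballI conjI impI)
    fix i j assume i: "i \<in> {1..N}" and j: "j \<in> {1..M}"
    show "hdist x y (u i j) \<ge> r0" using hu R_def by simp
    show "(u i j)$3 \<ge> h0" by (simp add: u_def)
    assume j2: "2 \<le> j"
    have rj: "real (j - 1) = real j - 1" using j2 by (simp add: of_nat_diff)
    have dth: "th i j - th i (j-1) = c*t0/R" unfolding th_def rj using R0 by (simp add: field_simps)
    have "(norm (u i j - u i (j-1)))^2 = (R*(cos (th i j) - cos (th i (j-1))))^2 + (R*(sin (th i j) - sin (th i (j-1))))^2"
      unfolding norm3_sq by (simp add: u_def right_diff_distrib)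
    also have "\<dots> = R^2 * ((cos (th i j) - cos (th i (j-1)))^2 + (sin (th i j) - sin (th i (j-1)))^2)"
      by (simp add: power_mult_distrib distrib_left)
    also have "\<dots> \<le> R^2 * (th i j - th i (j-1))^2"
      by (rule mult_left_mono[OF chord]) simp
    also have "\<dots> = (c*t0)^2" unfolding dth using R0 by (simp add: power_divide)
    also have "\<dots> \<le> (t0*cmax)^2"
      using assms(7) assms(12) assms(13) by (intro power_mono) (auto simp: mult.commute intro: mult_right_mono)
    finally have n2: "(norm (u i j - u i (j-1)))^2 \<le> (t0*cmax)^2" .
    have tc: "0 \<le> t0*cmax" using assms(7) assms(8) by simp
    show "norm (u i j - u i (j - 1)) \<le> t0 * cmax"
      by (rule power2_le_imp_le[OF n2 tc])
  qed
  have opt: "det (FIM \<gamma> \<sigma> N M x y v) \<le> T^2" if fv: "feasible r0 h0 t0 cmax N M x y v" for v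
  proof -
    let ?F = "FIM \<gamma> \<sigma> N M x y v"
    define cv where "cv i j = inverse ((\<sigma> i)^2) * (hdist x y (v i j))^2 / (norm (v i j - target x y))^4" for i j
    have vi: "hdist x y (v i j) \<ge> r0" "(v i j)$3 \<ge> h0" if "i\<in>{1..N}" "j\<in>{1..M}" for i j
      using fv that unfolding feasible_def by auto
    have cv0: "cv i j \<ge> 0" for i j unfolding cv_def by simp
    have cvle: "cv i j \<le> w i * \<rho>" if ij: "i\<in>{1..N}" "j\<in>{1..M}" for i j
    proof -
      have v1: "hdist x y (v i j) \<ge> r0" using vi(1)[OF ij] .
      have v2: "(v i j)$3 \<ge> h0" using vi(2)[OF ij] .
      have n2: "(norm (v i j - target x y))^2 = (hdist x y (v i j))^2 + ((v i j)$3)^2" by (rule norm_sq3)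
      have n4: "(norm (v i j - target x y))^4 = ((hdist x y (v i j))^2 + ((v i j)$3)^2)^2"
        by (simp only: n2[symmetric] power_mult[symmetric]) simp
      have rb: "(hdist x y (v i j))^2 / ((hdist x y (v i j))^2 + ((v i j)$3)^2)^2 \<le> \<rho>"
        unfolding \<rho>_def R_def by (rule ratio_bound[OF assms(5) assms(6) v1 v2])
      have "cv i j = w i * ((hdist x y (v i j))^2 / ((hdist x y (v i j))^2 + ((v i j)$3)^2)^2)"
        unfolding cv_def n4 w_def by simp
      also have "\<dots> \<le> w i * \<rho>" by (rule mult_left_mono[OF rb w0])
      finally show ?thesis .
    qed
    have sym: "?F$1$2 = ?F$2$1" unfolding FIM_entry by (simp add: mult_ac)
    have "?F$1$1 + ?F$2$2 = K * (\<Sum>i=1..N. \<Sum>j=1..M. cv i j * ((gvec x y (v i j)$1)^2 + (gvec x y (v i j)$2)^2))"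
      unfolding FIM_entry cv_def K_def by (simp add: power2_eq_square distrib_left sum.distrib)
    also have "\<dots> = K * (\<Sum>i=1..N. \<Sum>j=1..M. cv i j)"
    proof -
      have "(\<Sum>i=1..N. \<Sum>j=1..M. cv i j * ((gvec x y (v i j)$1)^2 + (gvec x y (v i j)$2)^2)) = (\<Sum>i=1..N. \<Sum>j=1..M. cv i j)"
      proof (intro sum.cong refl)
        fix i j assume "i \<in> {1..N}" "j \<in> {1..M}"
        hence "hdist x y (v i j) > 0" using vi assms(5) by force
        thus "cv i j * ((gvec x y (v i j)$1)^2 + (gvec x y (v i j)$2)^2) = cv i j" by (simp add: gvec_unit)
      qed
      thus ?thesis by simp
    qed
    finally have tr: "?F$1$1 + ?F$2$2 = K * (\<Sum>i=1..N. \<Sum>j=1..M. cv i j)" .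
    have "(\<Sum>i=1..N. \<Sum>j=1..M. cv i j) \<le> (\<Sum>i=1..N. \<Sum>j=1..M. w i * \<rho>)"
      by (intro sum_mono) (use cvle in auto)
    also have "\<dots> = \<rho> * (real M * S)" by (simp add: S_def sum_distrib_left mult_ac)
    finally have s1: "(\<Sum>i=1..N. \<Sum>j=1..M. cv i j) \<le> \<rho> * (real M * S)" .
    have s0: "0 \<le> (\<Sum>i=1..N. \<Sum>j=1..M. cv i j)" by (intro sum_nonneg) (use cv0 in auto)
    have t1: "(?F$1$1 + ?F$2$2)/2 \<le> T" unfolding tr T_def using mult_left_mono[OF s1 K0] by simp
    have t0: "0 \<le> (?F$1$1 + ?F$2$2)/2" unfolding tr using s0 K0 by simp
    have "det ?F \<le> ((?F$1$1 + ?F$2$2)/2)^2" by (rule det_sym[OF sym])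
    also have "\<dots> \<le> T^2" by (rule power_mono[OF t1 t0])
    finally show ?thesis .
  qed
  show ?thesis unfolding ueq optimal_P_def using feas_u opt detu by auto
qed

end
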